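(* Let $q$ be a prime power and let $n,k,r,x$ be integers with $0\le x\le r\le \min(n,k)$. Let $\mathbf{M}$ be a random $n\times k$ matrix over $\mathbb{F}_q$ whose entries are independent and uniformly distributed on $\mathbb{F}_q$, conditioned on $\mathrm{rank}(\mathbf{M})=r$, and let $X=\{i\in\{1,\dots,k\}:\mathbf{e}_i\in\mathrm{Row}(\mathbf{M})\}$. Then $$P(|X|\ge x\mid R=r,\,N=n)=\frac{1}{\binom{k}{r}_q}\sum_{i=x}^{r}\binom{k}{i}\sum_{j=0}^{k-i}(-1)^j\binom{k-i}{j}\binom{k-i-j}{r-i-j}_q .$$
   Context: $\mathbf{e}_i$ denotes the $i$-th standard unit vector of $\mathbb{F}_q^k$, and $\mathrm{Row}(\mathbf{M})$ is the row space of $\mathbf{M}$. $R$ denotes the rank of $\mathbf{M}$ and $N$ its number of rows. $\binom{m}{d}$ is the ordinary binomial coefficient. $\binom{m}{d}_q$ is the Gaussian binomial coefficient, i.e. the number of $d$-dimensional subspaces of an $m$-dimensional vector space over $\mathbb{F}_q$, $\binom{m}{d}_q=\prod_{i=0}^{d-1}\frac{q^{m}-q^{i}}{q^{d}-q^{i}}$ for $0\le d\le m$. By convention $\binom{m}{d}_q=0$ if $d<0$ or $d>m$. *)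

theory Defs
  imports "Jordan_Normal_Form.DL_Rank"
begin

definition gauss_binom :: "nat \<Rightarrow> int \<Rightarrow> int \<Rightarrow> real" where
  "gauss_binom q m d =
     (if 0 \<le> d \<and> d \<le> m
      then (\<Prod>i<nat d. (real q ^ nat m - real q ^ i) / (real q ^ nat d - real q ^ i))
      else 0)"

definition row_space :: "'a::field mat \<Rightarrow> 'a vec set" where
  "row_space M = {transpose_mat M *\<^sub>v c | c. c \<in> carrier_vec (dim_row M)}"

text \<open>X = set of (0-based) column indices i such that e_i lies in the row space.\<close>
definition unit_idx :: "'a::field mat \<Rightarrow> nat set" where
  "unit_idx M = {i. i < dim_col M \<and> unit_vec (dim_col M) i \<in> row_space M}"

end

theory Submission
  imports Defs
begin


definition lc :: "nat \<Rightarrow> (nat \<Rightarrow> 'a::field) \<Rightarrow> 'a vec list \<Rightarrow> 'a vec" where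
  "lc k c vs = vec k (\<lambda>j. \<Sum>i<length vs. c i * vs ! i $ j)"

definition spL :: "nat \<Rightarrow> 'a::field vec list \<Rightarrow> 'a vec set" where
  "spL k vs = range (\<lambda>c. lc k c vs)"

lemma lc_carrier[simp]: "lc k c vs \<in> carrier_vec k"
  by (simp add: lc_def)

lemma lc_dim[simp]: "dim_vec (lc k c vs) = k"
  by (simp add: lc_def)

lemma lc_index[simp]: "j < k \<Longrightarrow> lc k c vs $ j = (\<Sum>i<length vs. c i * vs ! i $ j)"
  by (simp add: lc_def)

lemma spL_carrier: "spL k vs \<subseteq> carrier_vec k"
  by (auto simp: spL_def)

lemma lc_cong: "(\<And>i. i < length vs \<Longrightarrow> c i = d i) \<Longrightarrow> lc k c vs = lc k d vs"
  unfolding lc_def by (intro arg_cong[where f="vec k"] ext sum.cong) auto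

lemma lc_add: "lc k c vs + lc k d vs = lc k (\<lambda>i. c i + d i) vs"
  by (rule eq_vecI) (auto simp: sum.distrib distrib_right)

lemma lc_smult: "a \<cdot>\<^sub>v lc k c vs = lc k (\<lambda>i. a * c i) vs"
  by (rule eq_vecI) (auto simp: sum_distrib_left mult.assoc)

lemma lc_zero: "lc k (\<lambda>_. 0) vs = 0\<^sub>v k"
  by (rule eq_vecI) auto

lemma lc_Nil: "lc k c [] = 0\<^sub>v k"
  by (rule eq_vecI) auto

lemma lc_snoc:
  assumes "v \<in> carrier_vec k"
  shows "lc k c (vs @ [v]) = lc k c vs + c (length vs) \<cdot>\<^sub>v v"
  using assms by (intro eq_vecI) (auto simp: nth_append)

lemma spL_add: "x \<in> spL k vs \<Longrightarrow> y \<in> spL k vs \<Longrightarrow> x + y \<in> spL k vs"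
  unfolding spL_def using lc_add by blast

lemma spL_smult: "x \<in> spL k vs \<Longrightarrow> a \<cdot>\<^sub>v x \<in> spL k vs"
  unfolding spL_def using lc_smult by blast

lemma spL_zero: "0\<^sub>v k \<in> spL k vs"
  unfolding spL_def using lc_zero by (metis rangeI)

lemma spL_Nil: "spL k [] = {0\<^sub>v k}"
  unfolding spL_def by (auto simp: lc_Nil)

lemma spL_nth:
  assumes "i < length vs" "vs ! i \<in> carrier_vec k"
  shows "vs ! i \<in> spL k vs"
proof -
  have "lc k (\<lambda>l. if l = i then 1 else 0) vs = vs ! i"
  proof (intro eq_vecI)
    fix j assume j: "j < dim_vec (vs ! i)"
    have "(\<Sum>l<length vs. (if l = i then 1 else 0) * vs ! l $ j) = (\<Sum>l<length vs. if l = i then vs ! l $ j else 0)"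
      by (rule sum.cong) auto
    then show "lc k (\<lambda>l. if l = i then 1 else 0) vs $ j = vs ! i $ j"
      using assms j by (simp add: sum.delta')
  qed (use assms in auto)
  then show ?thesis unfolding spL_def by (metis rangeI)
qed

lemma spL_mono_aux:
  assumes "set us \<subseteq> spL k vs"
  shows "lc k c us \<in> spL k vs"
  using assms
proof (induction us arbitrary: c rule: rev_induct)
  case Nil then show ?case by (simp add: lc_Nil spL_zero)
next
  case (snoc u us)
  have u: "u \<in> carrier_vec k" using snoc.prems spL_carrier by auto
  show ?case using snoc by (auto simp: lc_snoc[OF u] intro!: spL_add spL_smult)
qed

lemma spL_mono: "set us \<subseteq> spL k vs \<Longrightarrow> spL k us \<subseteq> spL k vs"
  using spL_mono_aux by (auto simp: spL_def)

lemma spL_snoc: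
  assumes v: "v \<in> carrier_vec k"
  shows "spL k (vs @ [v]) = (\<lambda>(w,a). w + a \<cdot>\<^sub>v v) ` (spL k vs \<times> UNIV)"
proof
  show "spL k (vs @ [v]) \<subseteq> (\<lambda>(w,a). w + a \<cdot>\<^sub>v v) ` (spL k vs \<times> UNIV)"
    by (auto simp: spL_def lc_snoc[OF v] image_iff)
next
  show "(\<lambda>(w,a). w + a \<cdot>\<^sub>v v) ` (spL k vs \<times> UNIV) \<subseteq> spL k (vs @ [v])"
  proof clarify
    fix w a assume "w \<in> spL k vs"
    then obtain c where w: "w = lc k c vs" by (auto simp: spL_def)
    have "lc k (c(length vs := a)) (vs @ [v]) = lc k (c(length vs := a)) vs + a \<cdot>\<^sub>v v"
      by (simp add: lc_snoc[OF v])
    also have "lc k (c(length vs := a)) vs = w" unfolding w by (rule lc_cong) auto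
    finally show "w + a \<cdot>\<^sub>v v \<in> spL k (vs @ [v])" unfolding spL_def by (metis rangeI)
  qed
qed

lemma finite_carrier_vec[simp]: "finite (carrier_vec k :: 'a::finite vec set)"
proof -
  have "carrier_vec k \<subseteq> vec_of_list ` {xs :: 'a list. set xs \<subseteq> UNIV \<and> length xs = k}"
  proof
    fix v :: "'a vec" assume "v \<in> carrier_vec k"
    then show "v \<in> vec_of_list ` {xs. set xs \<subseteq> UNIV \<and> length xs = k}"
      by (intro image_eqI[of _ _ "list_of_vec v"]) (auto simp: vec_list)
  qed
  moreover have "finite {xs :: 'a list. set xs \<subseteq> UNIV \<and> length xs = k}"
    by (rule finite_lists_length_eq) simp
  ultimately show ?thesis by (meson finite_imageI finite_subset)
qed

lemma finite_spL[simp]: "finite (spL k (vs :: 'a::{finite,field} vec list))"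
  by (rule finite_subset[OF spL_carrier]) simp

lemma card_spL_snoc:
  fixes vs :: "'a::{finite,field} vec list"
  assumes v: "v \<in> carrier_vec k" and nv: "v \<notin> spL k vs"
  shows "card (spL k (vs @ [v])) = card (UNIV::'a set) * card (spL k vs)"
proof -
  have inj: "inj_on (\<lambda>(w,a). w + a \<cdot>\<^sub>v v) (spL k vs \<times> UNIV)"
  proof (rule inj_onI, clarify)
    fix w a w' a' assume w: "w \<in> spL k vs" and w': "w' \<in> spL k vs"
      and eq: "w + a \<cdot>\<^sub>v v = w' + a' \<cdot>\<^sub>v v"
    have wc: "w \<in> carrier_vec k" "w' \<in> carrier_vec k" using w w' spL_carrier by auto
    have comp: "w $ j + a * v $ j = w' $ j + a' * v $ j" if "j < k" for j
    proof -
      have "(w + a \<cdot>\<^sub>v v) $ j = (w' + a' \<cdot>\<^sub>v v) $ j" using eq by simp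
      then show ?thesis using that wc v by simp
    qed
    show "w = w' \<and> a = a'"
    proof (cases "a = a'")
      case True
      then show ?thesis using comp wc by (intro conjI eq_vecI) auto
    next
      case False
      have "inverse (a - a') \<cdot>\<^sub>v (w' + (-1) \<cdot>\<^sub>v w) \<in> spL k vs"
        using w w' by (intro spL_smult spL_add)
      moreover have "inverse (a - a') \<cdot>\<^sub>v (w' + (-1) \<cdot>\<^sub>v w) = v"
      proof (rule eq_vecI)
        fix j assume "j < dim_vec v"
        then have j: "j < k" using v by simp
        have "(a - a') * v $ j = w' $ j - w $ j" using comp[OF j] by (simp add: algebra_simps)
        then have "v $ j = inverse (a - a') * (w' $ j - w $ j)"
          using False by (simp add: field_simps)
        then show "(inverse (a - a') \<cdot>\<^sub>v (w' + (-1) \<cdot>\<^sub>v w)) $ j = v $ j"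
          using j wc by simp
      qed (use wc v in simp)
      ultimately show ?thesis using nv by simp
    qed
  qed
  have "card (spL k (vs @ [v])) = card (spL k vs \<times> (UNIV :: 'a set))"
    unfolding spL_snoc[OF v] by (rule card_image[OF inj])
  then show ?thesis by (simp add: card_cartesian_product)
qed

definition ind :: "nat \<Rightarrow> 'a::field vec list \<Rightarrow> bool" where
  "ind k vs \<longleftrightarrow> set vs \<subseteq> carrier_vec k \<and> (\<forall>i<length vs. vs ! i \<notin> spL k (take i vs))"

lemma ind_Nil[simp]: "ind k []"
  by (simp add: ind_def)

lemma ind_snoc: "ind k (vs @ [v]) \<longleftrightarrow> ind k vs \<and> v \<in> carrier_vec k \<and> v \<notin> spL k vs"
proof -
  have t: "\<And>i. i \<le> length vs \<Longrightarrow> take i (vs @ [v]) = take i vs" by simp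
  have nt: "\<And>i. i < length vs \<Longrightarrow> (vs @ [v]) ! i = vs ! i" by (simp add: nth_append)
  have big: "(\<forall>i<length (vs @ [v]). (vs @ [v]) ! i \<notin> spL k (take i (vs @ [v])))
     \<longleftrightarrow> (\<forall>i<length vs. vs ! i \<notin> spL k (take i vs)) \<and> v \<notin> spL k vs"
  proof
    assume a: "\<forall>i<length (vs @ [v]). (vs @ [v]) ! i \<notin> spL k (take i (vs @ [v]))"
    show "(\<forall>i<length vs. vs ! i \<notin> spL k (take i vs)) \<and> v \<notin> spL k vs"
    proof (intro conjI allI impI)
      fix i assume "i < length vs" then show "vs ! i \<notin> spL k (take i vs)"
        using a[rule_format, of i] t[of i] nt[of i] by simp
    next
      show "v \<notin> spL k vs" using a[rule_format, of "length vs"] t[of "length vs"] by simp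
    qed
  next
    assume a: "(\<forall>i<length vs. vs ! i \<notin> spL k (take i vs)) \<and> v \<notin> spL k vs"
    show "\<forall>i<length (vs @ [v]). (vs @ [v]) ! i \<notin> spL k (take i (vs @ [v]))"
    proof (intro allI impI)
      fix i assume i: "i < length (vs @ [v])"
      show "(vs @ [v]) ! i \<notin> spL k (take i (vs @ [v]))"
      proof (cases "i < length vs")
        case True then show ?thesis using a t[of i] nt[of i] by simp
      next
        case False then have "i = length vs" using i by simp
        then show ?thesis using a by simp
      qed
    qed
  qed
  have c: "set (vs @ [v]) \<subseteq> carrier_vec k \<longleftrightarrow> set vs \<subseteq> carrier_vec k \<and> v \<in> carrier_vec k" by auto
  show ?thesis unfolding ind_def using big c by blast
qed

lemma card_ind:
  fixes vs :: "'a::{finite,field} vec list"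
  shows "ind k vs \<Longrightarrow> card (spL k vs) = card (UNIV::'a set) ^ length vs"
proof (induction vs rule: rev_induct)
  case Nil then show ?case by (simp add: spL_Nil)
next
  case (snoc v vs)
  then show ?case by (simp add: ind_snoc card_spL_snoc)
qed

lemma set_sub_spL: "set vs \<subseteq> carrier_vec k \<Longrightarrow> set vs \<subseteq> spL k vs"
  by (auto simp: in_set_conv_nth intro!: spL_nth)

lemma spL_eqI: "set us \<subseteq> spL k vs \<Longrightarrow> set vs \<subseteq> spL k us \<Longrightarrow> spL k us = spL k vs"
  using spL_mono by blast

lemma greedy:
  assumes "ind k es" "set ws \<subseteq> carrier_vec k"
  shows "\<exists>us. ind k (es @ us) \<and> spL k (es @ us) = spL k (es @ ws)"
  using assms
proof (induction ws arbitrary: es)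
  case Nil then show ?case by (intro exI[of _ "[]"]) simp
next
  case (Cons w ws)
  have esc: "set es \<subseteq> carrier_vec k" using Cons.prems by (simp add: ind_def)
  have w: "w \<in> carrier_vec k" using Cons.prems by simp
  show ?case
  proof (cases "w \<in> spL k es")
    case True
    have "spL k (es @ w # ws) = spL k (es @ ws)"
    proof (rule spL_eqI)
      have "spL k es \<subseteq> spL k (es @ ws)"
        using set_sub_spL[of "es @ ws" k] esc Cons.prems by (intro spL_mono) auto
      then show "set (es @ w # ws) \<subseteq> spL k (es @ ws)"
        using set_sub_spL[of "es @ ws" k] esc Cons.prems True by auto
      show "set (es @ ws) \<subseteq> spL k (es @ w # ws)"
        using set_sub_spL[of "es @ w # ws" k] esc Cons.prems by auto
    qed
    have wsc: "set ws \<subseteq> carrier_vec k" using Cons.prems by simp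
    obtain us where us: "ind k (es @ us)" "spL k (es @ us) = spL k (es @ ws)"
      using Cons.IH[OF Cons.prems(1) wsc] by blast
    show ?thesis by (rule exI[of _ us]) (use us \<open>spL k (es @ w # ws) = spL k (es @ ws)\<close> in simp)
  next
    case False
    then have i1: "ind k (es @ [w])" using Cons.prems w by (simp add: ind_snoc)
    have wsc: "set ws \<subseteq> carrier_vec k" using Cons.prems by simp
    obtain us where us:
      "ind k ((es @ [w]) @ us)" "spL k ((es @ [w]) @ us) = spL k ((es @ [w]) @ ws)"
      using Cons.IH[OF i1 wsc] by blast
    have e1: "(es @ [w]) @ us = es @ (w # us)" by simp
    have e2: "(es @ [w]) @ ws = es @ (w # ws)" by simp
    show ?thesis apply (rule exI[of _ "w # us"]) using us unfolding e1 e2 by blast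
  qed
qed

definition subsp :: "nat \<Rightarrow> 'a::field vec set \<Rightarrow> bool" where
  "subsp k V \<longleftrightarrow> (\<exists>ws. set ws \<subseteq> carrier_vec k \<and> V = spL k ws)"

lemma subsp_spL: "set ws \<subseteq> carrier_vec k \<Longrightarrow> subsp k (spL k ws)"
  unfolding subsp_def by blast

lemma ind_carrier: "ind k vs \<Longrightarrow> set vs \<subseteq> carrier_vec k"
  by (simp add: ind_def)

lemma subsp_extend:
  assumes "subsp k V" "ind k es" "set es \<subseteq> V"
  shows "\<exists>us. ind k (es @ us) \<and> spL k (es @ us) = V"
proof -
  obtain ws where ws: "set ws \<subseteq> carrier_vec k" "V = spL k ws" using assms(1) subsp_def by blast
  obtain us where us: "ind k (es @ us)" "spL k (es @ us) = spL k (es @ ws)"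
    using greedy[OF assms(2) ws(1)] by blast
  have eqV: "spL k (es @ ws) = V"
  proof -
    have esc: "set es \<subseteq> carrier_vec k" using ind_carrier[OF assms(2)] .
    have 1: "set (es @ ws) \<subseteq> spL k ws"
      using assms(3) set_sub_spL[OF ws(1)] unfolding ws(2) by simp
    have "set (es @ ws) \<subseteq> carrier_vec k" using esc ws(1) by simp
    then have 2: "set ws \<subseteq> spL k (es @ ws)" using set_sub_spL[of "es @ ws" k] by simp
    show ?thesis unfolding ws(2) using spL_eqI[OF 1 2] .
  qed
  show ?thesis using us(1) us(2)[unfolded eqV] by blast
qed

lemma subsp_basis: "subsp k V \<Longrightarrow> \<exists>vs. ind k vs \<and> spL k vs = V"
  using subsp_extend[of k V "[]"] by simp

lemma subsp_carrier: "subsp k V \<Longrightarrow> V \<subseteq> carrier_vec k"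
  using spL_carrier subsp_def by blast

lemma subsp_closed: "subsp k V \<Longrightarrow> set us \<subseteq> V \<Longrightarrow> spL k us \<subseteq> V"
  unfolding subsp_def using spL_mono by blast

lemma subsp_finite: "subsp k (V :: 'a::{finite,field} vec set) \<Longrightarrow> finite V"
  by (auto simp: subsp_def)

lemma subsp_eq:
  fixes U V :: "'a::{finite,field} vec set"
  shows "subsp k V \<Longrightarrow> U \<subseteq> V \<Longrightarrow> card U = card V \<Longrightarrow> U = V"
  using subsp_finite card_subset_eq by blast



lemma card_field_ge2: "card (UNIV::'a::{finite,field} set) \<ge> 2"
proof -
  have "card {0::'a, 1} = 2" by simp
  moreover have "card {0::'a, 1} \<le> card (UNIV::'a set)" by (rule card_mono) auto
  ultimately show ?thesis by simp
qed

definition Ext :: "nat \<Rightarrow> 'a::field vec list \<Rightarrow> 'a vec set \<Rightarrow> nat \<Rightarrow> 'a vec list set" where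
  "Ext k es V t = {us. length us = t \<and> set us \<subseteq> V \<and> ind k (es @ us)}"

lemma Ext_finite: "subsp k (V::'a::{finite,field} vec set) \<Longrightarrow> finite (Ext k es V t)"
proof -
  assume "subsp k V"
  then have "finite V" by (rule subsp_finite)
  then have "finite {us. set us \<subseteq> V \<and> length us = t}" by (rule finite_lists_length_eq)
  then show ?thesis unfolding Ext_def by (rule finite_subset[rotated]) auto
qed

lemma Ext_Suc:
  assumes V: "subsp k V"
  shows "Ext k es V (Suc t) = (\<lambda>(us,u). us @ [u]) ` (SIGMA us:Ext k es V t. V - spL k (es @ us))"
proof
  have Vc: "V \<subseteq> carrier_vec k" using subsp_carrier[OF V] .
  show "Ext k es V (Suc t) \<subseteq> (\<lambda>(us,u). us @ [u]) ` (SIGMA us:Ext k es V t. V - spL k (es @ us))"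
  proof
    fix xs assume xs: "xs \<in> Ext k es V (Suc t)"
    then have l: "length xs = Suc t" by (simp add: Ext_def)
    then have xs_eq: "xs = butlast xs @ [last xs]"
      by (metis append_butlast_last_id list.size(3) nat.simps(3))
    have i: "ind k ((es @ butlast xs) @ [last xs])" using xs xs_eq by (simp add: Ext_def)
    have sx: "set xs \<subseteq> V" using xs by (simp add: Ext_def)
    then have sb: "set (butlast xs) \<subseteq> V" "last xs \<in> V"
      using xs_eq by (metis Un_subset_iff set_append, metis l last_in_set list.size(3) nat.simps(3) subsetD)
    have "butlast xs \<in> Ext k es V t" using i sb l ind_snoc[of k "es @ butlast xs" "last xs"] by (simp add: Ext_def)
    moreover have "last xs \<in> V - spL k (es @ butlast xs)" using i sb ind_snoc[of k "es @ butlast xs" "last xs"] by simp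
    ultimately show "xs \<in> (\<lambda>(us,u). us @ [u]) ` (SIGMA us:Ext k es V t. V - spL k (es @ us))"
      by (subst xs_eq) (rule image_eqI[of _ _ "(butlast xs, last xs)"], auto)
  qed
next
  have Vc: "V \<subseteq> carrier_vec k" using subsp_carrier[OF V] .
  show "(\<lambda>(us,u). us @ [u]) ` (SIGMA us:Ext k es V t. V - spL k (es @ us)) \<subseteq> Ext k es V (Suc t)"
  proof clarify
    fix us u assume us: "us \<in> Ext k es V t" and u: "u \<in> V" "u \<notin> spL k (es @ us)"
    have "ind k ((es @ us) @ [u])" unfolding ind_snoc using us u Vc by (auto simp: Ext_def)
    then show "us @ [u] \<in> Ext k es V (Suc t)" using us u by (simp add: Ext_def)
  qed
qed

lemma card_Ext:
  fixes V :: "'a::{finite,field} vec set"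
  assumes V: "subsp k V" and es: "ind k es" "set es \<subseteq> V"
  shows "real (card (Ext k es V t)) =
    (\<Prod>i<t. real (card V) - real (card (UNIV::'a set)) ^ (length es + i))"
proof (induction t)
  case 0
  have "Ext k es V 0 = {[]}" using es by (auto simp: Ext_def)
  then show ?case by simp
next
  case (Suc t)
  let ?q = "card (UNIV::'a set)"
  have inj: "inj_on (\<lambda>(us,u). us @ [u]) (SIGMA us:Ext k es V t. V - spL k (es @ us))"
    by (rule inj_onI) auto
  have fin: "finite (Ext k es V t)" using Ext_finite[OF V] .
  have cB: "card (V - spL k (es @ us)) = card V - ?q ^ (length es + t)" if "us \<in> Ext k es V t" for us
  proof -
    have i: "ind k (es @ us)" and l: "length us = t" and s: "set us \<subseteq> V" using that by (auto simp: Ext_def)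
    have sub: "spL k (es @ us) \<subseteq> V" using subsp_closed[OF V] s es by simp
    have "card (V - spL k (es @ us)) = card V - card (spL k (es @ us))"
      using sub subsp_finite[OF V] by (simp add: card_Diff_subset finite_subset)
    then show ?thesis using card_ind[OF i] l by simp
  qed
  have le: "?q ^ (length es + t) \<le> card V" if "us \<in> Ext k es V t" for us
  proof -
    have i: "ind k (es @ us)" and l: "length us = t" and s: "set us \<subseteq> V" using that by (auto simp: Ext_def)
    have sub: "spL k (es @ us) \<subseteq> V" using subsp_closed[OF V] s es by simp
    have "card (spL k (es @ us)) \<le> card V" using sub subsp_finite[OF V] by (rule card_mono[rotated])
    then show ?thesis using card_ind[OF i] l by simp
  qed
  have "card (Ext k es V (Suc t)) = card (SIGMA us:Ext k es V t. V - spL k (es @ us))"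
    unfolding Ext_Suc[OF V] by (rule card_image[OF inj])
  also have "\<dots> = (\<Sum>us\<in>Ext k es V t. card (V - spL k (es @ us)))"
    using fin subsp_finite[OF V] by (intro card_SigmaI) auto
  also have "\<dots> = (\<Sum>us\<in>Ext k es V t. card V - ?q ^ (length es + t))"
    using cB by (rule sum.cong[OF refl])
  finally have "real (card (Ext k es V (Suc t))) = real (card (Ext k es V t)) * real (card V - ?q ^ (length es + t))"
    by simp
  note A = this
  show ?case
  proof (cases "Ext k es V t = {}")
    case True
    then show ?thesis using A Suc.IH by simp
  next
    case False
    then obtain us where "us \<in> Ext k es V t" by blast
    from le[OF this] have "real (card V - ?q ^ (length es + t)) = real (card V) - real ?q ^ (length es + t)"
      by (simp add: of_nat_diff)
    then show ?thesis using A Suc.IH by (simp add: mult.commute)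
  qed
qed

lemma spL_in_Ext_eq:
  fixes U :: "'a::{finite,field} vec set"
  assumes U: "subsp k U" "card U = card (UNIV::'a set) ^ (length es + t)"
    and us: "us \<in> Ext k es U t" and es: "set es \<subseteq> U"
  shows "spL k (es @ us) = U"
proof -
  have i: "ind k (es @ us)" and l: "length us = t" and s: "set us \<subseteq> U" using us by (auto simp: Ext_def)
  have sub: "spL k (es @ us) \<subseteq> U" using subsp_closed[OF U(1)] s es by simp
  show ?thesis using subsp_eq[OF U(1) sub] card_ind[OF i] l U(2) by simp
qed

lemma q_pow_inj: "card (UNIV::'a::{finite,field} set) ^ a \<le> card (UNIV::'a set) ^ b \<longleftrightarrow> a \<le> b"
  using card_field_ge2[where 'a='a] by (intro power_increasing_iff) simp

lemma count_sub:
  fixes V :: "'a::{finite,field} vec set"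
  assumes V: "subsp k V" and es: "ind k es" "set es \<subseteq> V" and cV: "card V = card (UNIV::'a set) ^ R"
  shows "real (card {U. subsp k U \<and> spL k es \<subseteq> U \<and> U \<subseteq> V \<and> card U = card (UNIV::'a set) ^ d})
     = gauss_binom (card (UNIV::'a set)) (int R - int (length es)) (int d - int (length es))"
proof -
  let ?q = "card (UNIV::'a set)"
  let ?m = "length es"
  define \<U> where "\<U> = {U. subsp k U \<and> spL k es \<subseteq> U \<and> U \<subseteq> V \<and> card U = ?q ^ d}"
  have q2: "?q \<ge> 2" by (rule card_field_ge2)
  have esc: "set es \<subseteq> carrier_vec k" using ind_carrier[OF es(1)] .
  have cE: "card (spL k es) = ?q ^ ?m" using card_ind[OF es(1)] .
  have EV: "spL k es \<subseteq> V" using subsp_closed[OF V es(2)] .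
  have "card (spL k es) \<le> card V" using EV subsp_finite[OF V] by (rule card_mono[rotated])
  then have mR: "?m \<le> R" using cE cV q_pow_inj[where 'a='a] by simp
  have finU: "finite \<U>"
  proof -
    have "\<U> \<subseteq> Pow V" unfolding \<U>_def by auto
    then show ?thesis using subsp_finite[OF V] finite_subset by blast
  qed
  show ?thesis
  proof (cases "d < ?m \<or> d > R")
    case True
    have "\<U> = {}"
    proof (rule ccontr)
      assume "\<U> \<noteq> {}"
      then obtain U where U: "subsp k U" "spL k es \<subseteq> U" "U \<subseteq> V" "card U = ?q ^ d" unfolding \<U>_def by blast
      have "card (spL k es) \<le> card U" using U(2) subsp_finite[OF U(1)] by (rule card_mono[rotated])
      then have 1: "?m \<le> d" using cE U(4) q_pow_inj[where 'a='a] by simp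
      have "card U \<le> card V" using U(3) subsp_finite[OF V] by (rule card_mono[rotated])
      then have 2: "d \<le> R" using cV U(4) q_pow_inj[where 'a='a] by simp
      show False using 1 2 True by simp
    qed
    moreover have "gauss_binom ?q (int R - int ?m) (int d - int ?m) = 0"
      using True unfolding gauss_binom_def by auto
    ultimately show ?thesis by (simp add: \<U>_def[symmetric])
  next
    case False
    then have md: "?m \<le> d" "d \<le> R" by auto
    define t where "t = d - ?m"
    have dt: "d = ?m + t" using md t_def by simp
    have union: "Ext k es V t = (\<Union>U\<in>\<U>. Ext k es U t)"
    proof
      show "Ext k es V t \<subseteq> (\<Union>U\<in>\<U>. Ext k es U t)"
      proof
        fix us assume us: "us \<in> Ext k es V t"
        have i: "ind k (es @ us)" and l: "length us = t" and s: "set us \<subseteq> V" using us by (auto simp: Ext_def)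
        have c: "set (es @ us) \<subseteq> carrier_vec k" using ind_carrier[OF i] .
        let ?U = "spL k (es @ us)"
        have "?U \<in> \<U>" unfolding \<U>_def
        proof (intro CollectI conjI)
          show "subsp k ?U" using subsp_spL[OF c] .
          show "spL k es \<subseteq> ?U" using set_sub_spL[OF c] by (intro spL_mono) auto
          show "?U \<subseteq> V" using subsp_closed[OF V] s es(2) by simp
          show "card ?U = ?q ^ d" using card_ind[OF i] l dt by simp
        qed
        moreover have "us \<in> Ext k es ?U t" using us set_sub_spL[OF c] by (auto simp: Ext_def)
        ultimately show "us \<in> (\<Union>U\<in>\<U>. Ext k es U t)" by blast
      qed
      show "(\<Union>U\<in>\<U>. Ext k es U t) \<subseteq> Ext k es V t" unfolding \<U>_def Ext_def by auto
    qed
    have esU: "set es \<subseteq> U" if "U \<in> \<U>" for U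
      using that set_sub_spL[OF esc] unfolding \<U>_def by auto
    have disj: "Ext k es U t \<inter> Ext k es U' t = {}" if "U \<in> \<U>" "U' \<in> \<U>" "U \<noteq> U'" for U U'
    proof (rule ccontr)
      assume "Ext k es U t \<inter> Ext k es U' t \<noteq> {}"
      then obtain us where us: "us \<in> Ext k es U t" "us \<in> Ext k es U' t" by blast
      have "spL k (es @ us) = U"
        using that(1) esU[OF that(1)] us(1) dt by (intro spL_in_Ext_eq) (auto simp: \<U>_def)
      moreover have "spL k (es @ us) = U'"
        using that(2) esU[OF that(2)] us(2) dt by (intro spL_in_Ext_eq) (auto simp: \<U>_def)
      ultimately show False using that(3) by simp
    qed
    define PU where "PU = (\<Prod>i<t. real (?q ^ d) - real ?q ^ (?m + i))"
    define PV where "PV = (\<Prod>i<t. real (?q ^ R) - real ?q ^ (?m + i))"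
    have cU: "real (card (Ext k es U t)) = PU" if "U \<in> \<U>" for U
      using card_Ext[of k U es t] that esU[OF that] es(1) unfolding PU_def \<U>_def by auto
    have "card (Ext k es V t) = (\<Sum>U\<in>\<U>. card (Ext k es U t))"
      unfolding union
    proof (rule card_UN_disjoint[OF finU])
      show "\<forall>U\<in>\<U>. finite (Ext k es U t)" using Ext_finite unfolding \<U>_def by blast
      show "\<forall>U\<in>\<U>. \<forall>U'\<in>\<U>. U \<noteq> U' \<longrightarrow> Ext k es U t \<inter> Ext k es U' t = {}" using disj by blast
    qed
    then have "real (card (Ext k es V t)) = (\<Sum>U\<in>\<U>. real (card (Ext k es U t)))" by simp
    also have "\<dots> = real (card \<U>) * PU" using cU by simp
    finally have eq: "PV = real (card \<U>) * PU"
      using card_Ext[OF V es, of t] cV unfolding PV_def by simp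
    have nz: "\<forall>i\<in>{..<t}. real (?q ^ d) - real ?q ^ (?m + i) \<noteq> 0"
    proof
      fix i assume "i \<in> {..<t}"
      then have "?m + i < d" using dt by simp
      then have "real ?q ^ (?m + i) < real ?q ^ d" using q2 by (intro power_strict_increasing) auto
      then show "real (?q ^ d) - real ?q ^ (?m + i) \<noteq> 0" by simp
    qed
    have PU0: "PU \<noteq> 0" unfolding PU_def using nz by (subst prod_zero_iff) auto
    have "real (card \<U>) = PV / PU" using eq PU0 by simp
    also have "\<dots> = (\<Prod>i<t. (real ?q ^ R - real ?q ^ (?m + i)) / (real ?q ^ d - real ?q ^ (?m + i)))"
      unfolding PV_def PU_def by (simp add: prod_dividef)
    also have "\<dots> = (\<Prod>i<t. (real ?q ^ (R - ?m) - real ?q ^ i) / (real ?q ^ t - real ?q ^ i))"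
    proof (rule prod.cong[OF refl])
      fix i
      have qm: "real ?q ^ ?m \<noteq> 0" using q2 by simp
      have "real ?q ^ R = real ?q ^ ?m * real ?q ^ (R - ?m)" using mR by (simp flip: power_add)
      moreover have "real ?q ^ d = real ?q ^ ?m * real ?q ^ t" using dt by (simp add: power_add)
      moreover have "real ?q ^ (?m + i) = real ?q ^ ?m * real ?q ^ i" by (simp add: power_add)
      ultimately show "(real ?q ^ R - real ?q ^ (?m + i)) / (real ?q ^ d - real ?q ^ (?m + i))
          = (real ?q ^ (R - ?m) - real ?q ^ i) / (real ?q ^ t - real ?q ^ i)"
        using qm by (simp add: right_diff_distrib[symmetric])
    qed
    also have "\<dots> = gauss_binom ?q (int R - int ?m) (int d - int ?m)"
      unfolding gauss_binom_def using md mR t_def by (simp add: nat_diff_distrib)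
    finally show ?thesis unfolding \<U>_def .
  qed
qed



lemma row_space_spL:
  assumes M: "M \<in> carrier_mat n k"
  shows "row_space M = spL k (rows M)"
proof -
  have key: "transpose_mat M *\<^sub>v c = lc k (\<lambda>i. c $ i) (rows M)" if c: "c \<in> carrier_vec n" for c
  proof (rule eq_vecI)
    fix j assume "j < dim_vec (lc k (\<lambda>i. c $ i) (rows M))"
    then have j: "j < k" by simp
    have "(transpose_mat M *\<^sub>v c) $ j = (\<Sum>i\<in>{0..<n}. M $$ (i, j) * c $ i)"
      using M c j by (simp add: scalar_prod_def)
    also have "\<dots> = (\<Sum>i<n. c $ i * rows M ! i $ j)"
      using M j by (intro sum.cong) (auto simp: mult.commute)
    finally show "(transpose_mat M *\<^sub>v c) $ j = lc k (\<lambda>i. c $ i) (rows M) $ j"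
      using M j by simp
  qed (use M in simp)
  show ?thesis
  proof
    show "row_space M \<subseteq> spL k (rows M)"
      unfolding row_space_def spL_def using M key by auto
    show "spL k (rows M) \<subseteq> row_space M"
    proof
      fix v assume "v \<in> spL k (rows M)"
      then obtain cf where v: "v = lc k cf (rows M)" by (auto simp: spL_def)
      have "v = transpose_mat M *\<^sub>v vec n cf"
        unfolding key[of "vec n cf", OF vec_carrier] v using M by (intro lc_cong) simp
      then show "v \<in> row_space M" unfolding row_space_def using M by auto
    qed
  qed
qed

lemma card_rows_le_cols:
  fixes M :: "'a::{finite,field} mat"
  assumes M: "M \<in> carrier_mat n k"
  shows "card (spL k (rows M)) \<le> card (spL n (cols M))"
proof -
  let ?q = "card (UNIV::'a set)"
  have cc: "set (cols M) \<subseteq> carrier_vec n" using M by (auto simp: cols_def)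
  obtain ws where ws: "ind n ws" "spL n ws = spL n (cols M)"
    using subsp_basis[OF subsp_spL[OF cc]] by blast
  define d where "d = length ws"
  have "\<forall>j. \<exists>a. j < k \<longrightarrow> col M j = lc n a ws"
  proof
    fix j
    show "\<exists>a. j < k \<longrightarrow> col M j = lc n a ws"
    proof (cases "j < k")
      case True
      then have "col M j \<in> set (cols M)" using M by (auto simp: cols_def)
      then have "col M j \<in> spL n ws" using ws(2) set_sub_spL[OF cc] by auto
      then show ?thesis by (auto simp: spL_def)
    qed simp
  qed
  then obtain a where a: "\<And>j. j < k \<Longrightarrow> col M j = lc n (a j) ws" by metis
  define G where "G t = vec k (\<lambda>j. \<Sum>l<d. a j l * t l)" for t :: "nat \<Rightarrow> 'a"
  have G_restr: "G (restrict t {..<d}) = G t" for t unfolding G_def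
    by (intro arg_cong[where f="vec k"] ext sum.cong) auto
  have rep: "lc k cf (rows M) = G (\<lambda>l. \<Sum>i<n. cf i * ws ! l $ i)" for cf
  proof (rule eq_vecI)
    fix j assume "j < dim_vec (G (\<lambda>l. \<Sum>i<n. cf i * ws ! l $ i))"
    then have j: "j < k" by (simp add: G_def)
    have Mij: "M $$ (i, j) = (\<Sum>l<d. a j l * ws ! l $ i)" if i: "i < n" for i
    proof -
      have "M $$ (i, j) = col M j $ i" using M i j by simp
      also have "\<dots> = (\<Sum>l<d. a j l * ws ! l $ i)" unfolding a[OF j] using i d_def by simp
      finally show ?thesis .
    qed
    have "lc k cf (rows M) $ j = (\<Sum>i<n. cf i * M $$ (i, j))"
      using M j by (intro trans[OF lc_index[OF j]] sum.cong) auto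
    also have "\<dots> = (\<Sum>i<n. \<Sum>l<d. cf i * (a j l * ws ! l $ i))"
      using Mij by (simp add: sum_distrib_left)
    also have "\<dots> = (\<Sum>l<d. \<Sum>i<n. a j l * (cf i * ws ! l $ i))"
      by (subst sum.swap) (simp add: algebra_simps)
    also have "\<dots> = G (\<lambda>l. \<Sum>i<n. cf i * ws ! l $ i) $ j"
      using j by (simp add: G_def sum_distrib_left)
    finally show "lc k cf (rows M) $ j = G (\<lambda>l. \<Sum>i<n. cf i * ws ! l $ i) $ j" .
  qed (simp add: G_def)
  have "spL k (rows M) \<subseteq> G ` (PiE {..<d} (\<lambda>_. UNIV))"
  proof
    fix v assume "v \<in> spL k (rows M)"
    then obtain cf where v: "v = lc k cf (rows M)" by (auto simp: spL_def)
    let ?t = "\<lambda>l. \<Sum>i<n. cf i * ws ! l $ i"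
    have "v = G (restrict ?t {..<d})" unfolding v rep G_restr ..
    moreover have "restrict ?t {..<d} \<in> PiE {..<d} (\<lambda>_. UNIV)" by auto
    ultimately show "v \<in> G ` (PiE {..<d} (\<lambda>_. UNIV))" by blast
  qed
  then have "card (spL k (rows M)) \<le> card (G ` (PiE {..<d} (\<lambda>_. UNIV::'a set)))"
    by (rule card_mono[rotated]) (simp add: finite_PiE)
  also have "\<dots> \<le> card (PiE {..<d} (\<lambda>_. UNIV::'a set))" by (rule card_image_le) (simp add: finite_PiE)
  also have "\<dots> = ?q ^ d" by (simp add: card_PiE)
  also have "\<dots> = card (spL n (cols M))" using card_ind[OF ws(1)] ws(2) d_def by simp
  finally show ?thesis .
qed

lemma card_row_space:
  fixes M :: "'a::{finite,field} mat"
  assumes M: "M \<in> carrier_mat n k"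
  shows "card (row_space M) = card (spL n (cols M))"
proof -
  have MT: "transpose_mat M \<in> carrier_mat k n" using M by simp
  show ?thesis
    using card_rows_le_cols[OF M] card_rows_le_cols[OF MT] row_space_spL[OF M] by simp
qed



lemma nth_notin_take: "distinct xs \<Longrightarrow> i < length xs \<Longrightarrow> xs ! i \<notin> set (take i xs)"
  by (metis distinct_append id_take_nth_drop disjoint_iff list.set_intros(1) set_append)

context vec_space
begin

lemma lc_in_span:
  assumes W: "W \<subseteq> carrier_vec n"
  shows "set ys \<subseteq> span W \<Longrightarrow> lc n c ys \<in> span W"
proof (induction ys rule: rev_induct)
  case Nil
  have "0\<^sub>v n = lincomb (\<lambda>_. 0) {}" by (simp add: lincomb_def)
  then have "0\<^sub>v n \<in> span W" by (rule in_spanI) auto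
  then show ?case by (simp add: lc_Nil)
next
  case (snoc y ys)
  have y: "y \<in> span W" using snoc.prems by simp
  then have yc: "y \<in> carrier_vec n" using span_closed[of W y] W by simp
  have a: "lc n c ys \<in> span W" using snoc by simp
  have b: "c (length ys) \<cdot>\<^sub>v y \<in> span W" using smult_in_span[OF W y] .
  show ?case unfolding lc_snoc[OF yc] using span_add1[OF _ a b] W by simp
qed

lemma span_sub_lc:
  assumes d: "distinct xs" and xs: "set xs \<subseteq> carrier_vec n"
  shows "span (set xs) \<subseteq> spL n xs"
proof
  fix v assume "v \<in> span (set xs)"
  then obtain a where a: "lincomb a (set xs) = v"
    using finite_in_span[of "set xs" v] xs by auto
  have "lincomb a (set xs) = lc n (\<lambda>i. a (xs ! i)) xs"
  proof (rule eq_vecI)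
    fix j assume "j < dim_vec (lc n (\<lambda>i. a (xs ! i)) xs)"
    then have j: "j < n" by simp
    have "lincomb a (set xs) $ j = (\<Sum>x\<in>set xs. a x * x $ j)" using lincomb_index[OF j xs] .
    also have "\<dots> = (\<Sum>i<length xs. a (xs ! i) * xs ! i $ j)"
    proof -
      have im: "(!) xs ` {..<length xs} = set xs" by (auto simp: set_conv_nth)
      show ?thesis unfolding im[symmetric]
        by (subst sum.reindex[OF inj_on_nth[OF d]]) auto
    qed
    finally show "lincomb a (set xs) $ j = lc n (\<lambda>i. a (xs ! i)) xs $ j" using j by simp
  qed (use lincomb_dim[of "set xs" a] xs in simp)
  then show "v \<in> spL n xs" unfolding a[symmetric] spL_def by simp
qed

lemma rank_basis:
  assumes A: "A \<in> carrier_mat n nc"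
  shows "\<exists>ws. ind n ws \<and> spL n ws = spL n (cols A) \<and> length ws = rank A"
proof -
  have cc: "set (cols A) \<subseteq> carrier_vec n" using A by (auto simp: cols_def)
  obtain S where S: "maximal S (\<lambda>T. T \<subseteq> set (cols A) \<and> lin_indpt T)"
    using maximal_exists[of "(\<lambda>T. T \<subseteq> set (cols A) \<and> lin_indpt T)" "card (set (cols A))" "{}"]
    by (meson List.finite_set card_mono empty_iff empty_subsetI finite_lin_indpt2 rev_finite_subset)
  have rk: "rank A = card S" using rank_card_indpt[OF A S] .
  have SC: "S \<subseteq> set (cols A)" and li: "lin_indpt S" using S unfolding maximal_def by auto
  have finS: "finite S" using SC finite_subset by blast
  obtain xs where xs: "distinct xs" "set xs = S" using finite_distinct_list[OF finS] by blast
  have Sc: "S \<subseteq> carrier_vec n" using SC cc by blast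
  have xsc: "set xs \<subseteq> carrier_vec n" using xs Sc by simp
  have ind: "ind n xs"
    unfolding ind_def
  proof (intro conjI allI impI xsc notI)
    fix i assume i: "i < length xs" and inn: "xs ! i \<in> spL n (take i xs)"
    have tc: "set (take i xs) \<subseteq> carrier_vec n" using xsc by (meson set_take_subset subset_trans)
    have "spL n (take i xs) \<subseteq> span (set (take i xs))"
      using lc_in_span[OF tc, of "take i xs"] in_own_span[OF tc] by (auto simp: spL_def)
    also have "\<dots> \<subseteq> span (S - {xs ! i})"
      using nth_notin_take[OF xs(1) i] xs(2) set_take_subset[of i xs]
      by (intro span_is_monotone) auto
    finally have "xs ! i \<in> span (S - {xs ! i})" using inn by blast
    moreover have "xs ! i \<in> S" using i xs(2) by auto
    ultimately have "lin_dep S" using lindep_span[OF Sc finS] by blast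
    then show False using li by simp
  qed
  have "spL n xs = spL n (cols A)"
  proof (rule spL_eqI)
    show "set xs \<subseteq> spL n (cols A)" using xs(2) SC set_sub_spL[OF cc] by blast
    show "set (cols A) \<subseteq> spL n xs"
    proof
      fix c assume c: "c \<in> set (cols A)"
      show "c \<in> spL n xs"
      proof (cases "c \<in> S")
        case True then show ?thesis using set_sub_spL[OF xsc] xs(2) by blast
      next
        case False
        have "c \<in> span S"
        proof (rule ccontr)
          assume "c \<notin> span S"
          then have "lin_indpt (S \<union> {c})"
            using lin_dep_iff_in_span[OF Sc li _ False] c cc by blast
          moreover have "S \<union> {c} \<subseteq> set (cols A)" using SC c by blast
          ultimately have "S \<union> {c} = S" using S unfolding maximal_def by blast
          then show False using False by blast
        qed
        then show ?thesis using span_sub_lc[OF xs(1) xsc] xs(2) by blast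
      qed
    qed
  qed
  moreover have "length xs = rank A" using rk xs distinct_card by fastforce
  ultimately show ?thesis using ind by blast
qed

end

lemma card_cols_rank:
  fixes M :: "'a::{finite,field} mat"
  assumes M: "M \<in> carrier_mat n k"
  shows "card (spL n (cols M)) = card (UNIV::'a set) ^ vec_space.rank n M"
proof -
  obtain ws where ws: "ind n ws" "spL n ws = spL n (cols M)" "length ws = vec_space.rank n M"
    using vec_space.rank_basis[OF M] by blast
  show ?thesis using card_ind[OF ws(1)] ws by simp
qed

lemma card_row_space_rank:
  fixes M :: "'a::{finite,field} mat"
  assumes M: "M \<in> carrier_mat n k"
  shows "card (row_space M) = card (UNIV::'a set) ^ vec_space.rank n M"
  using card_row_space[OF M] card_cols_rank[OF M] by simp



lemma q_pow_eq: "card (UNIV::'a::{finite,field} set) ^ a = card (UNIV::'a set) ^ b \<longleftrightarrow> a = b"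
  using card_field_ge2[where 'a='a] by (intro power_inject_exp) simp

definition fib :: "nat \<Rightarrow> nat \<Rightarrow> 'a::field vec set \<Rightarrow> nat" where
  "fib n k V = card {M \<in> carrier_mat n k. row_space M = V}"

lemma mats_rows_in:
  assumes Vc: "V \<subseteq> carrier_vec k"
  shows "{M \<in> carrier_mat n k. set (rows M) \<subseteq> V} = mat_of_rows k ` {rs. set rs \<subseteq> V \<and> length rs = n}"
proof
  show "{M \<in> carrier_mat n k. set (rows M) \<subseteq> V} \<subseteq> mat_of_rows k ` {rs. set rs \<subseteq> V \<and> length rs = n}"
  proof
    fix M assume M: "M \<in> {M \<in> carrier_mat n k. set (rows M) \<subseteq> V}"
    then have "M = mat_of_rows k (rows M)" using mat_of_rows_rows[of M] by auto
    then show "M \<in> mat_of_rows k ` {rs. set rs \<subseteq> V \<and> length rs = n}" using M by auto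
  qed
  show "mat_of_rows k ` {rs. set rs \<subseteq> V \<and> length rs = n} \<subseteq> {M \<in> carrier_mat n k. set (rows M) \<subseteq> V}"
    using Vc by (auto simp: rows_mat_of_rows[of _ k])
qed

lemma mats_rows_in_card:
  fixes V :: "'a::{finite,field} vec set"
  assumes Vc: "V \<subseteq> carrier_vec k"
  shows "card {M \<in> carrier_mat n k. set (rows M) \<subseteq> V} = card V ^ n"
    and "finite {M \<in> carrier_mat n k. set (rows M) \<subseteq> V}"
proof -
  have fV: "finite V" using Vc finite_subset finite_carrier_vec by blast
  have inj: "inj_on (mat_of_rows k) {rs. set rs \<subseteq> V \<and> length rs = n}"
  proof (rule inj_onI)
    fix rs rs' assume "rs \<in> {rs. set rs \<subseteq> V \<and> length rs = n}" "rs' \<in> {rs. set rs \<subseteq> V \<and> length rs = n}"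
      "mat_of_rows k rs = mat_of_rows k rs'"
    then show "rs = rs'" using Vc rows_mat_of_rows[of rs k] rows_mat_of_rows[of rs' k] by auto
  qed
  show "card {M \<in> carrier_mat n k. set (rows M) \<subseteq> V} = card V ^ n"
    unfolding mats_rows_in[OF Vc] card_image[OF inj] using card_lists_length_eq[OF fV] by simp
  show "finite {M \<in> carrier_mat n k. set (rows M) \<subseteq> V}"
    unfolding mats_rows_in[OF Vc] using finite_lists_length_eq[OF fV] by simp
qed

lemma sum_fib:
  fixes V :: "'a::{finite,field} vec set"
  assumes V: "subsp k V"
  shows "card V ^ n = (\<Sum>U\<in>{U. subsp k U \<and> U \<subseteq> V}. fib n k U)"
proof -
  have Vc: "V \<subseteq> carrier_vec k" using subsp_carrier[OF V] .
  let ?S = "{U. subsp k U \<and> U \<subseteq> V}"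
  let ?F = "\<lambda>U. {M \<in> carrier_mat n k. row_space M = U}"
  have eq: "{M \<in> carrier_mat n k. set (rows M) \<subseteq> V} = (\<Union>U\<in>?S. ?F U)"
  proof
    show "{M \<in> carrier_mat n k. set (rows M) \<subseteq> V} \<subseteq> (\<Union>U\<in>?S. ?F U)"
    proof
      fix M assume M: "M \<in> {M \<in> carrier_mat n k. set (rows M) \<subseteq> V}"
      then have Mc: "M \<in> carrier_mat n k" by simp
      have rc: "set (rows M) \<subseteq> carrier_vec k" using set_rows_carrier[OF Mc] by blast
      have "row_space M \<in> ?S"
        using row_space_spL[OF Mc] subsp_spL[OF rc] subsp_closed[OF V] M by auto
      then show "M \<in> (\<Union>U\<in>?S. ?F U)" using Mc by blast
    qed
    show "(\<Union>U\<in>?S. ?F U) \<subseteq> {M \<in> carrier_mat n k. set (rows M) \<subseteq> V}"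
    proof
      fix M assume "M \<in> (\<Union>U\<in>?S. ?F U)"
      then obtain U where U: "subsp k U" "U \<subseteq> V" and M: "M \<in> carrier_mat n k" and r: "row_space M = U"
        by blast
      have rc: "set (rows M) \<subseteq> carrier_vec k" using set_rows_carrier[OF M] by blast
      have "set (rows M) \<subseteq> V" using set_sub_spL[OF rc] row_space_spL[OF M] r U(2) by blast
      then show "M \<in> {M \<in> carrier_mat n k. set (rows M) \<subseteq> V}" using M by simp
    qed
  qed
  have finS: "finite ?S"
  proof -
    have "?S \<subseteq> Pow V" by auto
    then show ?thesis using subsp_finite[OF V] finite_subset by blast
  qed
  have finM: "finite {M \<in> carrier_mat n k. set (rows M) \<subseteq> V}" using mats_rows_in_card(2)[OF Vc] .
  have "card V ^ n = card (\<Union>U\<in>?S. ?F U)" using mats_rows_in_card(1)[OF Vc, of n] eq by simp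
  also have "\<dots> = (\<Sum>U\<in>?S. card (?F U))"
  proof (rule card_UN_disjoint[OF finS])
    show "\<forall>U\<in>?S. finite (?F U)" using finM eq by (metis (no_types, lifting) UN_I finite_subset subsetI)
    show "\<forall>U\<in>?S. \<forall>U'\<in>?S. U \<noteq> U' \<longrightarrow> ?F U \<inter> ?F U' = {}" by blast
  qed
  finally show ?thesis unfolding fib_def .
qed

definition subd :: "nat \<Rightarrow> 'a::field vec set \<Rightarrow> nat \<Rightarrow> 'a vec set set" where
  "subd k V d = {U. subsp k U \<and> U \<subseteq> V \<and> card U = card (UNIV::'a set) ^ d}"

lemma subsp_zero: "subsp k U \<Longrightarrow> 0\<^sub>v k \<in> U"
  unfolding subsp_def using spL_zero by blast

lemma subsp_card_pow:
  fixes U :: "'a::{finite,field} vec set"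
  shows "subsp k U \<Longrightarrow> \<exists>d. card U = card (UNIV::'a set) ^ d"
  using subsp_basis card_ind by metis

lemma card_subd:
  fixes V :: "'a::{finite,field} vec set"
  assumes V: "subsp k V" and cV: "card V = card (UNIV::'a set) ^ R"
  shows "real (card (subd k V d)) = gauss_binom (card (UNIV::'a set)) (int R) (int d)"
proof -
  have "subd k V d = {U. subsp k U \<and> spL k [] \<subseteq> U \<and> U \<subseteq> V \<and> card U = card (UNIV::'a set) ^ d}"
    unfolding subd_def spL_Nil using subsp_zero by blast
  then show ?thesis using count_sub[OF V ind_Nil _ cV, of d] by simp
qed

lemma decomp:
  fixes V :: "'a::{finite,field} vec set"
  assumes V: "subsp k V" and cV: "card V = card (UNIV::'a set) ^ R"
  shows "card V ^ n = fib n k V + (\<Sum>d<R. \<Sum>U\<in>subd k V d. fib n k U)"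
proof -
  let ?q = "card (UNIV::'a set)"
  let ?S = "{U. subsp k U \<and> U \<subseteq> V}"
  have finS: "finite ?S"
  proof -
    have "?S \<subseteq> Pow V" by auto
    then show ?thesis using subsp_finite[OF V] finite_subset by blast
  qed
  have Seq: "?S = insert V (\<Union>d\<in>{..<R}. subd k V d)"
  proof
    show "?S \<subseteq> insert V (\<Union>d\<in>{..<R}. subd k V d)"
    proof
      fix U assume U: "U \<in> ?S"
      obtain d where d: "card U = ?q ^ d" using subsp_card_pow U by blast
      have "card U \<le> card V" using U subsp_finite[OF V] by (intro card_mono) auto
      then have "d \<le> R" using d cV q_pow_inj[where 'a='a] by simp
      moreover have "d = R \<Longrightarrow> U = V" using subsp_eq[OF V] U d cV by auto
      ultimately show "U \<in> insert V (\<Union>d\<in>{..<R}. subd k V d)" using U d unfolding subd_def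
        by (cases "d = R") auto
    qed
    show "insert V (\<Union>d\<in>{..<R}. subd k V d) \<subseteq> ?S" using V unfolding subd_def by auto
  qed
  have Vnot: "V \<notin> (\<Union>d\<in>{..<R}. subd k V d)"
  proof
    assume "V \<in> (\<Union>d\<in>{..<R}. subd k V d)"
    then obtain d where "d < R" "card V = ?q ^ d" unfolding subd_def by auto
    then show False using cV q_pow_eq[where 'a='a] by simp
  qed
  have fin_d: "finite (subd k V d)" for d
    using finS unfolding subd_def by (rule finite_subset[rotated]) auto
  have "card V ^ n = (\<Sum>U\<in>?S. fib n k U)" using sum_fib[OF V] .
  also have "\<dots> = fib n k V + (\<Sum>U\<in>(\<Union>d\<in>{..<R}. subd k V d). fib n k U)"
    unfolding Seq using Vnot fin_d by (subst sum.insert) auto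
  also have "(\<Sum>U\<in>(\<Union>d\<in>{..<R}. subd k V d). fib n k U) = (\<Sum>d<R. \<Sum>U\<in>subd k V d. fib n k U)"
  proof (rule sum.UNION_disjoint)
    show "finite {..<R}" by simp
    show "\<forall>i\<in>{..<R}. finite (subd k V i)" using fin_d by blast
    show "\<forall>i\<in>{..<R}. \<forall>j\<in>{..<R}. i \<noteq> j \<longrightarrow> subd k V i \<inter> subd k V j = {}"
    proof (intro ballI impI)
      fix i j :: nat assume "i \<noteq> j"
      then have "?q ^ i \<noteq> ?q ^ j" using q_pow_eq[where 'a='a] by simp
      then show "subd k V i \<inter> subd k V j = {}" unfolding subd_def by auto
    qed
  qed
  finally show ?thesis .
qed

definition phi :: "'a::field itself \<Rightarrow> nat \<Rightarrow> nat \<Rightarrow> nat \<Rightarrow> nat" where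
  "phi T n k d = fib n k (SOME U::'a vec set. subsp k U \<and> card U = card (UNIV::'a set) ^ d)"

lemma fib_const:
  fixes V :: "'a::{finite,field} vec set"
  assumes "subsp k V" "card V = card (UNIV::'a set) ^ R"
  shows "fib n k V = phi TYPE('a) n k R"
proof -
  let ?q = "card (UNIV::'a set)"
  have main: "\<forall>(V::'a vec set) (V'::'a vec set). subsp k V \<longrightarrow> subsp k V' \<longrightarrow> card V = ?q ^ R \<longrightarrow> card V' = ?q ^ R
     \<longrightarrow> fib n k V = fib n k V'"
  proof (induction R rule: less_induct)
    case (less R)
    have step: "(\<Sum>U\<in>subd k V d. fib n k U) = card (subd k V d) * phi TYPE('a) n k d"
      if d: "d < R" for d and V :: "'a vec set"
    proof -
      have "fib n k U = phi TYPE('a) n k d" if U: "U \<in> subd k V d" for U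
      proof -
        have ex: "\<exists>U::'a vec set. subsp k U \<and> card U = ?q ^ d" using U unfolding subd_def by blast
        define S where "S = (SOME U::'a vec set. subsp k U \<and> card U = ?q ^ d)"
        have S: "subsp k S \<and> card S = ?q ^ d" using someI_ex[OF ex] unfolding S_def .
        have U2: "subsp k U" "card U = ?q ^ d" using U unfolding subd_def by auto
        have "fib n k U = fib n k S" using less.IH[OF d] U2 S by blast
        then show ?thesis unfolding phi_def S_def .
      qed
      then show ?thesis by simp
    qed
    show ?case
    proof (intro allI impI)
      fix V V' :: "'a vec set"
      assume V: "subsp k V" and V': "subsp k V'" and cV: "card V = ?q ^ R" and cV': "card V' = ?q ^ R"
      have cs: "card (subd k V d) = card (subd k V' d)" for d
        using card_subd[OF V cV, of d] card_subd[OF V' cV', of d] by simp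
      have "fib n k V + (\<Sum>d<R. card (subd k V d) * phi TYPE('a) n k d) = card V ^ n"
        using decomp[OF V cV, of n] step by simp
      moreover have "fib n k V' + (\<Sum>d<R. card (subd k V' d) * phi TYPE('a) n k d) = card V' ^ n"
        using decomp[OF V' cV', of n] step by simp
      ultimately show "fib n k V = fib n k V'" using cV cV' cs by simp
    qed
  qed
  have ex: "\<exists>U::'a vec set. subsp k U \<and> card U = ?q ^ R" using assms by blast
  show ?thesis unfolding phi_def using main someI_ex[OF ex] assms by blast
qed

lemma fib_pos:
  fixes V :: "'a::{finite,field} vec set"
  assumes V: "subsp k V" and cV: "card V = card (UNIV::'a set) ^ r" and rn: "r \<le> n"
  shows "fib n k V > 0"
proof -
  obtain vs where vs: "ind k vs" "spL k vs = V" using subsp_basis[OF V] by blast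
  have "card (UNIV::'a set) ^ length vs = card (UNIV::'a set) ^ r" using card_ind[OF vs(1)] vs(2) cV by simp
  then have lr: "length vs = r" using q_pow_eq[where 'a='a] by simp
  define rs where "rs = vs @ replicate (n - r) (0\<^sub>v k)"
  have rsc: "set rs \<subseteq> carrier_vec k" using ind_carrier[OF vs(1)] unfolding rs_def by auto
  define M where "M = mat_of_rows k rs"
  have Mc: "M \<in> carrier_mat n k" unfolding M_def rs_def using lr rn by (metis mat_of_rows_carrier(1) length_append length_replicate le_add_diff_inverse)
  have rM: "rows M = rs" unfolding M_def using rsc by simp
  have "row_space M = spL k rs" using row_space_spL[OF Mc] rM by simp
  also have "\<dots> = spL k vs"
  proof (rule spL_eqI)
    show "set rs \<subseteq> spL k vs" unfolding rs_def using set_sub_spL[OF ind_carrier[OF vs(1)]] spL_zero by auto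
    show "set vs \<subseteq> spL k rs" using set_sub_spL[OF rsc] unfolding rs_def by auto
  qed
  finally have "M \<in> {M \<in> carrier_mat n k. row_space M = V}" using Mc vs(2) by simp
  moreover have "finite {M \<in> carrier_mat n k. row_space M = V}"
  proof -
    have Vc: "V \<subseteq> carrier_vec k" using subsp_carrier[OF V] .
    have "{M \<in> carrier_mat n k. row_space M = V} \<subseteq> {M \<in> carrier_mat n k. set (rows M) \<subseteq> V}"
    proof
      fix M assume "M \<in> {M \<in> carrier_mat n k. row_space M = V}"
      then have M: "M \<in> carrier_mat n k" and "row_space M = V" by auto
      have rc: "set (rows M) \<subseteq> carrier_vec k" using set_rows_carrier[OF M] by blast
      then have "set (rows M) \<subseteq> V" using set_sub_spL[OF rc] row_space_spL[OF M] \<open>row_space M = V\<close>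
        by simp
      then show "M \<in> {M \<in> carrier_mat n k. set (rows M) \<subseteq> V}" using M by simp
    qed
    then show ?thesis using mats_rows_in_card(2)[OF Vc] finite_subset by blast
  qed
  ultimately show ?thesis unfolding fib_def by (metis card_gt_0_iff empty_iff)
qed



lemma ind_units:
  assumes d: "distinct xs" and xs: "set xs \<subseteq> {..<k}"
  shows "ind k (map (unit_vec k) xs :: 'a::field vec list)"
  unfolding ind_def
proof (intro conjI allI impI notI)
  show "set (map (unit_vec k) xs :: 'a vec list) \<subseteq> carrier_vec k" by auto
next
  fix i assume i: "i < length (map (unit_vec k) xs :: 'a vec list)"
    and inn: "(map (unit_vec k) xs :: 'a vec list) ! i \<in> spL k (take i (map (unit_vec k) xs))"
  have xi: "xs ! i < k" using i xs nth_mem by fastforce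
  obtain c where c: "(unit_vec k (xs ! i) :: 'a vec) = lc k c (take i (map (unit_vec k) xs))"
    using inn i by (auto simp: spL_def)
  have "(unit_vec k (xs ! i) :: 'a vec) $ (xs ! i) = 1" using xi by simp
  moreover have "lc k c (take i (map (unit_vec k) xs)) $ (xs ! i) = (0::'a)"
  proof -
    have "lc k c (take i (map (unit_vec k) xs)) $ (xs ! i)
        = (\<Sum>l<length (take i (map (unit_vec k) xs :: 'a vec list)). c l * (take i (map (unit_vec k) xs :: 'a vec list)) ! l $ (xs ! i))"
      using xi by simp
    also have "\<dots> = 0"
    proof (rule sum.neutral, rule ballI)
      fix l assume l: "l \<in> {..<length (take i (map (unit_vec k) xs :: 'a vec list))}"
      then have li: "l < i" "l < length xs" by auto
      have "xs ! l \<noteq> xs ! i" using d li i by (simp add: nth_eq_iff_index_eq)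
      moreover have "xs ! l < k" using li xs nth_mem by fastforce
      ultimately show "c l * (take i (map (unit_vec k) xs :: 'a vec list)) ! l $ (xs ! i) = 0"
        using li xi by simp
    qed
    finally show ?thesis .
  qed
  ultimately show False using c by simp
qed

definition XV :: "nat \<Rightarrow> 'a::field vec set \<Rightarrow> nat set" where
  "XV k V = {i. i < k \<and> unit_vec k i \<in> V}"

definition esS :: "nat \<Rightarrow> nat set \<Rightarrow> 'a::field vec list" where
  "esS k S = map (unit_vec k) (sorted_list_of_set S)"

lemma esS_props:
  assumes "S \<subseteq> {..<k}"
  shows "ind k (esS k S :: 'a::field vec list)" "length (esS k S :: 'a vec list) = card S"
    "set (esS k S :: 'a vec list) = unit_vec k ` S"
proof -
  have fS: "finite S" using assms finite_subset by blast
  show "ind k (esS k S :: 'a::field vec list)" unfolding esS_def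
    using assms fS by (intro ind_units) auto
  show "length (esS k S :: 'a vec list) = card S" unfolding esS_def using fS by simp
  show "set (esS k S :: 'a vec list) = unit_vec k ` S" unfolding esS_def using fS by simp
qed

lemma XV_sub: "S \<subseteq> {..<k} \<Longrightarrow> subsp k V \<Longrightarrow> S \<subseteq> XV k V \<longleftrightarrow> spL k (esS k S) \<subseteq> V"
proof -
  assume S: "S \<subseteq> {..<k}" and V: "subsp k V"
  have set: "set (esS k S :: 'a vec list) = unit_vec k ` S" using esS_props(3)[OF S] .
  have c: "set (esS k S :: 'a vec list) \<subseteq> carrier_vec k" using ind_carrier[OF esS_props(1)[OF S]] .
  show ?thesis
  proof
    assume "S \<subseteq> XV k V"
    then have "set (esS k S) \<subseteq> V" unfolding set XV_def by auto
    then show "spL k (esS k S) \<subseteq> V" using subsp_closed[OF V] by blast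
  next
    assume "spL k (esS k S) \<subseteq> V"
    then have "unit_vec k ` S \<subseteq> V" using set_sub_spL[OF c] set by blast
    then show "S \<subseteq> XV k V" using S unfolding XV_def by auto
  qed
qed

lemma carrier_subsp:
  shows "subsp k (carrier_vec k :: 'a::{finite,field} vec set)"
    and "card (carrier_vec k :: 'a vec set) = card (UNIV::'a set) ^ k"
proof -
  have S: "{..<k} \<subseteq> {..<k}" by simp
  have i: "ind k (esS k {..<k} :: 'a vec list)" using esS_props(1)[OF S] .
  have eq: "spL k (esS k {..<k} :: 'a vec list) = carrier_vec k"
  proof
    show "spL k (esS k {..<k}) \<subseteq> carrier_vec k" by (rule spL_carrier)
    show "carrier_vec k \<subseteq> spL k (esS k {..<k} :: 'a vec list)"
    proof
      fix v :: "'a vec" assume v: "v \<in> carrier_vec k"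
      have "v = lc k (\<lambda>i. v $ i) (esS k {..<k})"
      proof (rule eq_vecI)
        fix j assume "j < dim_vec (lc k (\<lambda>i. v $ i) (esS k {..<k} :: 'a vec list))"
        then have j: "j < k" by simp
        have sl: "sorted_list_of_set {..<k} = [0..<k]" by (simp add: lessThan_atLeast0)
        have "lc k (\<lambda>i. v $ i) (esS k {..<k} :: 'a vec list) $ j = (\<Sum>i<k. v $ i * unit_vec k i $ j)"
          using j by (simp add: esS_def sl)
        also have "\<dots> = (\<Sum>i<k. if i = j then v $ i else 0)"
          using j by (intro sum.cong) auto
        also have "\<dots> = v $ j" using j by simp
        finally show "v $ j = lc k (\<lambda>i. v $ i) (esS k {..<k} :: 'a vec list) $ j" by simp
      qed (use v in simp)
      then show "v \<in> spL k (esS k {..<k})" unfolding spL_def by (metis rangeI)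
    qed
  qed
  have c: "set (esS k {..<k} :: 'a vec list) \<subseteq> carrier_vec k" using ind_carrier[OF i] .
  show "subsp k (carrier_vec k :: 'a vec set)" using subsp_spL[OF c] eq by simp
  show "card (carrier_vec k :: 'a vec set) = card (UNIV::'a set) ^ k"
    using card_ind[OF i] esS_props(2)[OF S, where 'a='a] eq by simp
qed



lemma finite_carrier_mat: "finite (carrier_mat n k :: 'a::{finite,field} mat set)"
proof -
  have "carrier_mat n k \<subseteq> {M \<in> carrier_mat n k. set (rows M) \<subseteq> (carrier_vec k :: 'a vec set)}"
    using set_rows_carrier by blast
  then show ?thesis using mats_rows_in_card(2)[of "carrier_vec k :: 'a vec set" k n] finite_subset by blast
qed

lemma count_rs:
  fixes Q :: "'a::{finite,field} vec set \<Rightarrow> bool"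
  shows "card {M :: 'a mat. M \<in> carrier_mat n k \<and> vec_space.rank n M = r \<and> Q (row_space M)}
    = card {V::'a vec set. subsp k V \<and> card V = card (UNIV::'a set) ^ r \<and> Q V} * phi TYPE('a) n k r"
proof -
  let ?q = "card (UNIV::'a set)"
  let ?W = "{V::'a vec set. subsp k V \<and> card V = ?q ^ r \<and> Q V}"
  let ?F = "\<lambda>V. {M \<in> carrier_mat n k. row_space M = V}"
  have eq: "{M :: 'a mat. M \<in> carrier_mat n k \<and> vec_space.rank n M = r \<and> Q (row_space M)} = (\<Union>V\<in>?W. ?F V)"
  proof
    show "{M :: 'a mat. M \<in> carrier_mat n k \<and> vec_space.rank n M = r \<and> Q (row_space M)} \<subseteq> (\<Union>V\<in>?W. ?F V)"
    proof
      fix M :: "'a mat" assume "M \<in> {M. M \<in> carrier_mat n k \<and> vec_space.rank n M = r \<and> Q (row_space M)}"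
      then have M: "M \<in> carrier_mat n k" "vec_space.rank n M = r" "Q (row_space M)" by auto
      have rc: "set (rows M) \<subseteq> carrier_vec k" using set_rows_carrier[OF M(1)] by blast
      have "row_space M \<in> ?W"
        using M card_row_space_rank[OF M(1)] row_space_spL[OF M(1)] subsp_spL[OF rc] by simp
      then show "M \<in> (\<Union>V\<in>?W. ?F V)" using M by blast
    qed
    show "(\<Union>V\<in>?W. ?F V) \<subseteq> {M :: 'a mat. M \<in> carrier_mat n k \<and> vec_space.rank n M = r \<and> Q (row_space M)}"
    proof
      fix M assume "M \<in> (\<Union>V\<in>?W. ?F V)"
      then obtain V where V: "V \<in> ?W" and M: "M \<in> carrier_mat n k" "row_space M = V" by blast
      have "?q ^ vec_space.rank n M = ?q ^ r" using card_row_space_rank[OF M(1)] M(2) V by simp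
      then have "vec_space.rank n M = r" using q_pow_eq[where 'a='a] by blast
      then show "M \<in> {M :: 'a mat. M \<in> carrier_mat n k \<and> vec_space.rank n M = r \<and> Q (row_space M)}"
        using M V by simp
    qed
  qed
  have finW: "finite ?W"
  proof -
    have "?W \<subseteq> Pow (carrier_vec k)"
    proof
      fix V assume "V \<in> ?W" then show "V \<in> Pow (carrier_vec k)" using subsp_carrier[of k V] by simp
    qed
    then show ?thesis by (rule finite_subset) simp
  qed
  have "card (\<Union>V\<in>?W. ?F V) = (\<Sum>V\<in>?W. card (?F V))"
  proof (rule card_UN_disjoint[OF finW])
    show "\<forall>V\<in>?W. finite (?F V)"
      using finite_carrier_mat[of n k, where 'a='a] by (auto intro: finite_subset[rotated])
    show "\<forall>V\<in>?W. \<forall>V'\<in>?W. V \<noteq> V' \<longrightarrow> ?F V \<inter> ?F V' = {}" by blast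
  qed
  also have "\<dots> = (\<Sum>V\<in>?W. phi TYPE('a) n k r)"
    using fib_const unfolding fib_def by (intro sum.cong) auto
  finally show ?thesis unfolding eq by simp
qed

lemma cnt:
  assumes m: "m \<le> k"
  shows "real (k choose m) * gauss_binom (card (UNIV::'a::{finite,field} set)) (int k - int m) (int r - int m)
    = (\<Sum>V\<in>{V::'a vec set. subsp k V \<and> card V = card (UNIV::'a set) ^ r}. real (card (XV k V) choose m))"
proof -
  let ?q = "card (UNIV::'a set)"
  let ?G = "gauss_binom ?q (int k - int m) (int r - int m)"
  let ?V = "{V::'a vec set. subsp k V \<and> card V = ?q ^ r}"
  let ?S = "{S. S \<subseteq> {..<k} \<and> card S = m}"
  have finV: "finite ?V"
  proof -
    have "?V \<subseteq> Pow (carrier_vec k)"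
    proof
      fix V assume "V \<in> ?V" then show "V \<in> Pow (carrier_vec k)" using subsp_carrier[of k V] by simp
    qed
    then show ?thesis by (rule finite_subset) simp
  qed
  have finS: "finite ?S" by (rule finite_subset[of _ "Pow {..<k}"]) auto
  have cS: "card ?S = k choose m" using n_subsets[of "{..<k}" m] by simp
  have XVk: "XV k V \<subseteq> {..<k}" for V :: "'a vec set" unfolding XV_def by auto
  have per_V: "real (card (XV k V) choose m) = (\<Sum>S\<in>?S. of_bool (S \<subseteq> XV k V))" for V :: "'a vec set"
  proof -
    have fX: "finite (XV k V)" using XVk finite_subset by blast
    have "{S. S \<subseteq> XV k V \<and> card S = m} = ?S \<inter> {S. S \<subseteq> XV k V}" using XVk by blast
    then have "card (XV k V) choose m = card (?S \<inter> {S. S \<subseteq> XV k V})" using n_subsets[OF fX, of m] by simp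
    then show ?thesis using finS by simp
  qed
  have per_S: "(\<Sum>V\<in>?V. of_bool (S \<subseteq> XV k V)) = ?G" if S: "S \<in> ?S" for S
  proof -
    have Sk: "S \<subseteq> {..<k}" and cSm: "card S = m" using S by auto
    define es where "es = (esS k S :: 'a vec list)"
    have ies: "ind k es" unfolding es_def using esS_props(1)[OF Sk] .
    have ses: "set es \<subseteq> carrier_vec k" using ind_carrier[OF ies] .
    have les: "length es = m" unfolding es_def using esS_props(2)[OF Sk, where 'a='a] cSm by simp
    have "?V \<inter> {V. S \<subseteq> XV k V} =
      {U. subsp k U \<and> spL k es \<subseteq> U \<and> U \<subseteq> carrier_vec k \<and> card U = ?q ^ r}"
      unfolding es_def using XV_sub[OF Sk] subsp_carrier by blast
    moreover have "real (card {U. subsp k U \<and> spL k es \<subseteq> U \<and> U \<subseteq> carrier_vec k \<and> card U = ?q ^ r})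
        = gauss_binom ?q (int k - int m) (int r - int m)"
      using count_sub[OF carrier_subsp(1) ies ses carrier_subsp(2), of r] les by simp
    ultimately show ?thesis using finV by simp
  qed
  have "(\<Sum>V\<in>?V. real (card (XV k V) choose m)) = (\<Sum>V\<in>?V. \<Sum>S\<in>?S. of_bool (S \<subseteq> XV k V))"
    using per_V by simp
  also have "\<dots> = (\<Sum>S\<in>?S. \<Sum>V\<in>?V. of_bool (S \<subseteq> XV k V))" by (rule sum.swap)
  also have "\<dots> = (\<Sum>S\<in>?S. ?G)" using per_S by (intro sum.cong) auto
  also have "\<dots> = real (k choose m) * ?G" using cS by simp
  finally show ?thesis by simp
qed



lemma cm: "((i + j) choose i) * (s choose (i + j)) = (s choose i) * ((s - i) choose j)"
proof (cases "i + j \<le> s")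
  case True
  then show ?thesis using choose_mult[of i "i + j" s] by (simp add: mult.commute)
next
  case False
  then have z: "s choose (i + j) = 0" by simp
  show ?thesis
  proof (cases "i \<le> s")
    case True
    then have "s - i < j" using False by simp
    then have z2: "(s - i) choose j = 0" by (simp add: binomial_eq_0)
    show ?thesis by (simp only: z z2 mult_0 mult_0_right)
  next
    case f: False
    then have z2: "s choose i = 0" by (simp add: binomial_eq_0)
    show ?thesis by (simp only: z z2 mult_0 mult_0_right)
  qed
qed

lemma alt:
  assumes "i \<le> s" "s \<le> k"
  shows "(\<Sum>j=0..k-i. (-1)^j * real ((s - i) choose j)) = (if s = i then 1 else 0)"
proof -
  have "(\<Sum>j=0..k-i. (-1)^j * real ((s - i) choose j)) = (\<Sum>j\<le>s-i. (-1)^j * real ((s - i) choose j))"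
    using assms by (intro sum.mono_neutral_right) auto
  also have "\<dots> = (if s = i then 1 else 0)"
  proof (cases "s = i")
    case True then show ?thesis by simp
  next
    case False
    then have "s - i > 0" using assms by simp
    then show ?thesis using choose_alternating_sum[of "s - i", where 'a=real] False by simp
  qed
  finally show ?thesis .
qed

lemma inner:
  assumes "s \<le> k"
  shows "(\<Sum>j=0..k-i. (-1)^j * real ((i + j) choose i) * real (s choose (i + j))) = (if s = i then 1 else 0)"
proof -
  have "(\<Sum>j=0..k-i. (-1)^j * real ((i + j) choose i) * real (s choose (i + j)))
      = (\<Sum>j=0..k-i. real (s choose i) * ((-1)^j * real ((s - i) choose j)))"
  proof (rule sum.cong[OF refl])
    fix j
    have "real ((i + j) choose i) * real (s choose (i + j)) = real (s choose i) * real ((s - i) choose j)"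
      using cm[of i j s] by (metis of_nat_mult)
    then show "(-1)^j * real ((i + j) choose i) * real (s choose (i + j)) = real (s choose i) * ((-1)^j * real ((s - i) choose j))"
      by (simp add: algebra_simps)
  qed
  also have "\<dots> = real (s choose i) * (\<Sum>j=0..k-i. (-1)^j * real ((s - i) choose j))"
    by (simp add: sum_distrib_left)
  also have "\<dots> = (if s = i then 1 else 0)"
  proof (cases "i \<le> s")
    case True then show ?thesis using alt[OF True assms] by simp
  next
    case False then show ?thesis by simp
  qed
  finally show ?thesis .
qed

lemma outer:
  assumes "s \<le> r" "s \<le> k"
  shows "(\<Sum>i=x..r. \<Sum>j=0..k-i. (-1)^j * real ((i + j) choose i) * real (s choose (i + j))) = (if x \<le> s then 1 else 0)"
proof -
  have "(\<Sum>i=x..r. \<Sum>j=0..k-i. (-1)^j * real ((i + j) choose i) * real (s choose (i + j)))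
      = (\<Sum>i=x..r. (if s = i then 1 else 0))" using inner[OF assms(2)] by simp
  also have "\<dots> = (if s \<in> {x..r} then 1 else 0)" by (simp add: sum.delta)
  finally show ?thesis using assms by simp
qed

lemma XV_card_le:
  fixes V :: "'a::{finite,field} vec set"
  assumes V: "subsp k V" "card V = card (UNIV::'a set) ^ r"
  shows "card (XV k V) \<le> r" "card (XV k V) \<le> k"
proof -
  have Xk: "XV k V \<subseteq> {..<k}" unfolding XV_def by auto
  then show "card (XV k V) \<le> k" using card_mono[of "{..<k}" "XV k V"] by simp
  have sub: "spL k (esS k (XV k V)) \<subseteq> V" using XV_sub[OF Xk V(1)] by simp
  define es where "es = (esS k (XV k V) :: 'a vec list)"
  have ies: "ind k es" unfolding es_def using esS_props(1)[OF Xk] .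
  have les: "length es = card (XV k V)" unfolding es_def using esS_props(2)[OF Xk, where 'a='a] by simp
  have "card (spL k es) \<le> card V" using sub subsp_finite[OF V(1)] unfolding es_def by (rule card_mono[rotated])
  then show "card (XV k V) \<le> r" using card_ind[OF ies] les V(2) q_pow_inj[where 'a='a] by simp
qed

lemma main_sum:
  assumes rk: "r \<le> k"
  shows "(\<Sum>i = x..r. real (k choose i) *
            (\<Sum>j = 0..k - i. (-1) ^ j * real ((k - i) choose j) *
                gauss_binom (card (UNIV :: 'a::{finite,field} set)) (int k - int i - int j) (int r - int i - int j)))
    = real (card {V::'a vec set. subsp k V \<and> card V = card (UNIV::'a set) ^ r \<and> x \<le> card (XV k V)})"
proof -
  let ?q = "card (UNIV::'a set)"
  let ?V = "{V::'a vec set. subsp k V \<and> card V = ?q ^ r}"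
  let ?s = "\<lambda>V::'a vec set. card (XV k V)"
  have finV: "finite ?V"
  proof -
    have "?V \<subseteq> Pow (carrier_vec k)"
    proof
      fix V assume "V \<in> ?V" then show "V \<in> Pow (carrier_vec k)" using subsp_carrier[of k V] by simp
    qed
    then show ?thesis by (rule finite_subset) simp
  qed
  have step: "real (k choose i) * ((-1) ^ j * real ((k - i) choose j) *
        gauss_binom ?q (int k - int i - int j) (int r - int i - int j))
      = (\<Sum>V\<in>?V. (-1)^j * real ((i + j) choose i) * real (?s V choose (i + j)))"
    if ij: "i \<le> r" "j \<le> k - i" for i j
  proof -
    have ijk: "i + j \<le> k" using ij rk by simp
    have c: "real (k choose i) * real ((k - i) choose j) = real (k choose (i + j)) * real ((i + j) choose i)"
      using choose_mult[of i "i + j" k] ijk by (metis add_diff_cancel_left' le_add1 of_nat_mult)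
    have g: "int k - int i - int j = int k - int (i + j)" "int r - int i - int j = int r - int (i + j)" by simp_all
    have "real (k choose i) * ((-1) ^ j * real ((k - i) choose j) *
        gauss_binom ?q (int k - int i - int j) (int r - int i - int j))
      = (-1)^j * real ((i + j) choose i) * (real (k choose (i + j)) * gauss_binom ?q (int k - int (i + j)) (int r - int (i + j)))"
      using c unfolding g by (simp add: algebra_simps)
    also have "\<dots> = (-1)^j * real ((i + j) choose i) * (\<Sum>V\<in>?V. real (?s V choose (i + j)))"
      using cnt[OF ijk, of r, where 'a='a] by simp
    also have "\<dots> = (\<Sum>V\<in>?V. (-1)^j * real ((i + j) choose i) * real (?s V choose (i + j)))"
      by (simp add: sum_distrib_left)
    finally show ?thesis .
  qed
  have "(\<Sum>i = x..r. real (k choose i) *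
            (\<Sum>j = 0..k - i. (-1) ^ j * real ((k - i) choose j) *
                gauss_binom ?q (int k - int i - int j) (int r - int i - int j)))
      = (\<Sum>i = x..r. \<Sum>j = 0..k - i. \<Sum>V\<in>?V. (-1)^j * real ((i + j) choose i) * real (?s V choose (i + j)))"
    using step by (simp add: sum_distrib_left)
  also have "\<dots> = (\<Sum>i = x..r. \<Sum>V\<in>?V. \<Sum>j = 0..k - i. (-1)^j * real ((i + j) choose i) * real (?s V choose (i + j)))"
    by (intro sum.cong[OF refl] sum.swap)
  also have "\<dots> = (\<Sum>V\<in>?V. \<Sum>i = x..r. \<Sum>j = 0..k - i. (-1)^j * real ((i + j) choose i) * real (?s V choose (i + j)))"
    by (rule sum.swap)
  also have "\<dots> = (\<Sum>V\<in>?V. of_bool (x \<le> ?s V))"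
  proof (rule sum.cong[OF refl])
    fix V assume "V \<in> ?V"
    then have "?s V \<le> r" "?s V \<le> k" using XV_card_le[of k V r] by auto
    then show "(\<Sum>i = x..r. \<Sum>j = 0..k - i. (-1)^j * real ((i + j) choose i) * real (?s V choose (i + j)))
        = of_bool (x \<le> ?s V)" using outer by simp
  qed
  also have "\<dots> = real (card (?V \<inter> {V. x \<le> ?s V}))" using finV by simp
  also have "?V \<inter> {V. x \<le> ?s V} = {V::'a vec set. subsp k V \<and> card V = ?q ^ r \<and> x \<le> ?s V}" by blast
  finally show ?thesis .
qed



theorem corollary1:
  fixes n k r x :: nat
  assumes "x \<le> r" and "r \<le> min n k"
  shows "real (card {M :: ('a::{finite,field}) mat. M \<in> carrier_mat n k \<and>
                 vec_space.rank n M = r \<and> card (unit_idx M) \<ge> x})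
         / real (card {M :: 'a mat. M \<in> carrier_mat n k \<and> vec_space.rank n M = r})
       = (1 / gauss_binom (card (UNIV :: 'a set)) (int k) (int r)) *
         (\<Sum>i = x..r. real (k choose i) *
            (\<Sum>j = 0..k - i. (-1) ^ j * real ((k - i) choose j) *
                gauss_binom (card (UNIV :: 'a set)) (int k - int i - int j) (int r - int i - int j)))"
proof -
  let ?q = "card (UNIV::'a set)"
  have rk: "r \<le> k" and rn: "r \<le> n" using assms by auto
  let ?c = "phi TYPE('a) n k r"
  have "{M :: 'a mat. M \<in> carrier_mat n k \<and> vec_space.rank n M = r \<and> card (unit_idx M) \<ge> x}
      = {M :: 'a mat. M \<in> carrier_mat n k \<and> vec_space.rank n M = r \<and> (\<lambda>V. x \<le> card (XV k V)) (row_space M)}"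
    unfolding unit_idx_def XV_def by auto
  then have num: "card {M :: 'a mat. M \<in> carrier_mat n k \<and> vec_space.rank n M = r \<and> card (unit_idx M) \<ge> x}
      = card {V::'a vec set. subsp k V \<and> card V = ?q ^ r \<and> x \<le> card (XV k V)} * ?c"
    using count_rs[of n k r "\<lambda>V::'a vec set. x \<le> card (XV k V)"] by simp
  have "{M :: 'a mat. M \<in> carrier_mat n k \<and> vec_space.rank n M = r}
      = {M :: 'a mat. M \<in> carrier_mat n k \<and> vec_space.rank n M = r \<and> (\<lambda>V. True) (row_space M)}"
    by simp
  then have den: "card {M :: 'a mat. M \<in> carrier_mat n k \<and> vec_space.rank n M = r}
      = card {V::'a vec set. subsp k V \<and> card V = ?q ^ r} * ?c"
    using count_rs[of n k r "\<lambda>V::'a vec set. True"] by simp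
  have B: "real (card {V::'a vec set. subsp k V \<and> card V = ?q ^ r}) = gauss_binom ?q (int k) (int r)"
    using cnt[of 0 k r, where 'a='a] by simp
  have cpos: "?c > 0"
  proof -
    have S: "{..<r} \<subseteq> {..<k}" using rk by auto
    define es where "es = (esS k {..<r} :: 'a vec list)"
    have ies: "ind k es" unfolding es_def using esS_props(1)[OF S] .
    have les: "length es = r" unfolding es_def using esS_props(2)[OF S, where 'a='a] by simp
    have V0: "subsp k (spL k es)" using subsp_spL[OF ind_carrier[OF ies]] .
    have cV0: "card (spL k es) = ?q ^ r" using card_ind[OF ies] les by simp
    show ?thesis using fib_pos[OF V0 cV0 rn] fib_const[OF V0 cV0] by simp
  qed
  show ?thesis
    unfolding num den main_sum[OF rk, of x, where 'a='a] B[symmetric]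
    using cpos by simp
qed


end
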